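(* Let $g(s)$ be a smooth one-parameter family of Hermitian metrics compatible with a fixed complex structure $J$, and let $h=\frac{\partial}{\partial s}g(s)$. Then $$\frac{\partial}{\partial s}|T|^2=\langle h,-2Q^1+Q^2\rangle+4\langle\nabla h,T\rangle,$$ where $$\langle\nabla h,T\rangle=\frac12g^{i\bar j}g^{k\bar l}g^{m\bar n}\left(\nabla_ih_{k\bar n}T_{\bar j\bar lm}+T_{ik\bar n}\nabla_{\bar j}h_{\bar lm}\right).$$
   Context: In local holomorphic coordinates write $g_{i\bar j}$, $g^{i\bar j}$; $h_{\bar l m}=h_{m\bar l}$. The Chern connection $\nabla$ has Christoffel symbols $\Gamma_{ij}^k=g^{k\bar l}\partial_i g_{j\bar l}$ and conjugates, mixed symbols zero. Torsion $T_{ij\bar k}=\partial_i g_{j\bar k}-\partial_j g_{i\bar k}$, $T_{\bar i\bar j k}=\overline{T_{ij\bar k}}$, $|T|^2=g^{i\bar p}g^{j\bar q}g^{r\bar k}T_{ij\bar k}T_{\bar p\bar qr}$. $Q^1_{i\bar j}=g^{k\bar l}g^{m\bar n}T_{ik\bar n}T_{\bar j\bar l m}$, $Q^2_{i\bar j}=g^{k\bar l}g^{m\bar n}T_{\bar l\bar n i}T_{km\bar j}$. For $(1,1)$ tensors, $\langle h,A\rangle=h^{i\bar j}A_{i\bar j}$ with $h^{i\bar j}=g^{i\bar q}g^{p\bar j}h_{p\bar q}$. *)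

theory Defs
  imports "HOL-Analysis.Analysis"
begin

fun Ck_on :: "nat \<Rightarrow> 'a::real_normed_vector set \<Rightarrow> ('a \<Rightarrow> 'b::real_normed_vector) \<Rightarrow> bool" where
  "Ck_on 0 S f = continuous_on S f"
| "Ck_on (Suc k) S f = (f differentiable_on S \<and>
      (\<forall>v. Ck_on k S (\<lambda>x. frechet_derivative f (at x) v)))"

definition smooth_on :: "'a::real_normed_vector set \<Rightarrow> ('a \<Rightarrow> 'b::real_normed_vector) \<Rightarrow> bool" where
  "smooth_on S f = (\<forall>k. Ck_on k S f)"

definition dz :: "(complex^'n \<Rightarrow> complex) \<Rightarrow> 'n \<Rightarrow> complex^'n \<Rightarrow> complex" where
  "dz f i z = (frechet_derivative f (at z) (axis i 1)
              - \<i> * frechet_derivative f (at z) (axis i \<i>)) / 2"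

definition dzb :: "(complex^'n \<Rightarrow> complex) \<Rightarrow> 'n \<Rightarrow> complex^'n \<Rightarrow> complex" where
  "dzb f i z = (frechet_derivative f (at z) (axis i 1)
              + \<i> * frechet_derivative f (at z) (axis i \<i>)) / 2"

text \<open>A metric G is given by its matrix G z $ i $ j = g_{i bar j}.
  ginv G z $ k $ l = g^{k bar l}, characterised by  sum_l g^{k bar l} g_{j bar l} = delta_{kj}.\<close>
definition ginv :: "(complex^'n \<Rightarrow> complex^'n^'n) \<Rightarrow> complex^'n \<Rightarrow> complex^'n^'n" where
  "ginv G z = matrix_inv (transpose (G z))"

definition hermitian_metric_at :: "complex^'n^'n \<Rightarrow> bool" where
  "hermitian_metric_at M \<longleftrightarrow>
     (\<forall>i j. M $ j $ i = cnj (M $ i $ j)) \<and>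
     (\<forall>v::complex^'n. v \<noteq> 0 \<longrightarrow> 0 < Re (\<Sum>i\<in>UNIV. \<Sum>j\<in>UNIV. M $ i $ j * v $ i * cnj (v $ j)))"

definition chris :: "(complex^'n \<Rightarrow> complex^'n^'n) \<Rightarrow> 'n \<Rightarrow> 'n \<Rightarrow> 'n \<Rightarrow> complex^'n \<Rightarrow> complex" where
  "chris G i j k z = (\<Sum>l\<in>UNIV. ginv G z $ k $ l * dz (\<lambda>w. G w $ j $ l) i z)"

definition tor :: "(complex^'n \<Rightarrow> complex^'n^'n) \<Rightarrow> 'n \<Rightarrow> 'n \<Rightarrow> 'n \<Rightarrow> complex^'n \<Rightarrow> complex" where
  "tor G i j k z = dz (\<lambda>w. G w $ j $ k) i z - dz (\<lambda>w. G w $ i $ k) j z"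

definition normT2 :: "(complex^'n \<Rightarrow> complex^'n^'n) \<Rightarrow> complex^'n \<Rightarrow> complex" where
  "normT2 G z = (\<Sum>i\<in>UNIV. \<Sum>j\<in>UNIV. \<Sum>k\<in>UNIV. \<Sum>p\<in>UNIV. \<Sum>q\<in>UNIV. \<Sum>r\<in>UNIV.
      ginv G z $ i $ p * ginv G z $ j $ q * ginv G z $ r $ k
      * tor G i j k z * cnj (tor G p q r z))"

definition Q1 :: "(complex^'n \<Rightarrow> complex^'n^'n) \<Rightarrow> complex^'n \<Rightarrow> 'n \<Rightarrow> 'n \<Rightarrow> complex" where
  "Q1 G z i j = (\<Sum>k\<in>UNIV. \<Sum>l\<in>UNIV. \<Sum>m\<in>UNIV. \<Sum>n\<in>UNIV.
      ginv G z $ k $ l * ginv G z $ m $ n * tor G i k n z * cnj (tor G j l m z))"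

definition Q2 :: "(complex^'n \<Rightarrow> complex^'n^'n) \<Rightarrow> complex^'n \<Rightarrow> 'n \<Rightarrow> 'n \<Rightarrow> complex" where
  "Q2 G z i j = (\<Sum>k\<in>UNIV. \<Sum>l\<in>UNIV. \<Sum>m\<in>UNIV. \<Sum>n\<in>UNIV.
      ginv G z $ k $ l * ginv G z $ m $ n * cnj (tor G l n i z) * tor G k m j z)"

text \<open><h,A> = h^{i bar j} A_{i bar j},  h^{i bar j} = g^{i bar q} g^{p bar j} h_{p bar q};
  H $ p $ q = h_{p bar q}.\<close>
definition inner11 :: "(complex^'n \<Rightarrow> complex^'n^'n) \<Rightarrow> complex^'n \<Rightarrow> complex^'n^'n
    \<Rightarrow> ('n \<Rightarrow> 'n \<Rightarrow> complex) \<Rightarrow> complex" where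
  "inner11 G z H A = (\<Sum>i\<in>UNIV. \<Sum>j\<in>UNIV. \<Sum>p\<in>UNIV. \<Sum>q\<in>UNIV.
      ginv G z $ i $ q * ginv G z $ p $ j * H $ p $ q * A i j)"

text \<open>Chern covariant derivatives of a (1,1)-tensor Hf w $ k $ n = h_{k bar n}:
  nabla_i h_{k bar n} and nabla_{bar j} h_{bar l m} = nabla_{bar j} h_{m bar l}.\<close>
definition nabh :: "(complex^'n \<Rightarrow> complex^'n^'n) \<Rightarrow> (complex^'n \<Rightarrow> complex^'n^'n)
    \<Rightarrow> 'n \<Rightarrow> 'n \<Rightarrow> 'n \<Rightarrow> complex^'n \<Rightarrow> complex" where
  "nabh G Hf i k n z = dz (\<lambda>w. Hf w $ k $ n) i z - (\<Sum>p\<in>UNIV. chris G i k p z * Hf z $ p $ n)"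

definition nabbh :: "(complex^'n \<Rightarrow> complex^'n^'n) \<Rightarrow> (complex^'n \<Rightarrow> complex^'n^'n)
    \<Rightarrow> 'n \<Rightarrow> 'n \<Rightarrow> 'n \<Rightarrow> complex^'n \<Rightarrow> complex" where
  "nabbh G Hf j l m z = dzb (\<lambda>w. Hf w $ m $ l) j z - (\<Sum>q\<in>UNIV. cnj (chris G j l q z) * Hf z $ m $ q)"

definition innerNT :: "(complex^'n \<Rightarrow> complex^'n^'n) \<Rightarrow> (complex^'n \<Rightarrow> complex^'n^'n)
    \<Rightarrow> complex^'n \<Rightarrow> complex" where
  "innerNT G Hf z = (1/2) * (\<Sum>i\<in>UNIV. \<Sum>j\<in>UNIV. \<Sum>k\<in>UNIV. \<Sum>l\<in>UNIV. \<Sum>m\<in>UNIV. \<Sum>n\<in>UNIV.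
      ginv G z $ i $ j * ginv G z $ k $ l * ginv G z $ m $ n
      * (nabh G Hf i k n z * cnj (tor G j l m z) + tor G i k n z * nabbh G Hf j l m z))"

end

theory Submission
  imports Defs
begin

lemma line_vderiv:
  assumes "(\<phi> has_derivative \<phi>') (at (p + b *\<^sub>R v))"
  shows "((\<lambda>b. \<phi> (p + b *\<^sub>R v)) has_vector_derivative \<phi>' v) (at b)"
proof -
  have l: "linear \<phi>'" using assms has_derivative_linear by blast
  have "((\<lambda>b. p + b *\<^sub>R v) has_derivative (\<lambda>d. d *\<^sub>R v)) (at b)"
    by (auto intro!: derivative_eq_intros)
  from has_derivative_compose[OF this assms]
  have "((\<lambda>b. \<phi> (p + b *\<^sub>R v)) has_derivative (\<lambda>d. \<phi>' (d *\<^sub>R v))) (at b)" .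
  then show ?thesis unfolding has_vector_derivative_def
    using linear_scale[OF l] by simp
qed

lemma Ck2_facts:
  assumes "Ck_on (Suc (Suc 0)) S f" "open S"
  shows "\<And>x. x \<in> S \<Longrightarrow> (f has_derivative frechet_derivative f (at x)) (at x)"
    and "\<And>x v. x \<in> S \<Longrightarrow> ((\<lambda>y. frechet_derivative f (at y) v) has_derivative
            frechet_derivative (\<lambda>y. frechet_derivative f (at y) v) (at x)) (at x)"
    and "\<And>u v. continuous_on S (\<lambda>y. frechet_derivative (\<lambda>y. frechet_derivative f (at y) v) (at y) u)"
  using assms
  by (auto simp: differentiable_on_eq_differentiable_at frechet_derivative_works[symmetric])

lemma tri3: "norm (a - b) \<le> norm (a - c) + norm (b - c)" for a b c :: "'b::real_normed_vector"
  using norm_triangle_ineq4[of "a - c" "b - c"] by simp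

lemma schwarz_aux:
  fixes f :: "'a::real_normed_vector \<Rightarrow> 'b::real_normed_vector"
  assumes C: "Ck_on (Suc (Suc 0)) S f" and S: "open S" and x: "x \<in> S" and e: "e > 0"
  shows "\<exists>d>0. \<forall>t. 0 < t \<and> t < d \<longrightarrow>
    norm ((f (x + t*\<^sub>R v + t*\<^sub>R u) - f (x + t*\<^sub>R u)) - (f (x + t*\<^sub>R v) - f x)
      - (t*t) *\<^sub>R frechet_derivative (\<lambda>y. frechet_derivative f (at y) u) (at x) v) \<le> 9*e*(t*t)"
proof -
  define W where "W = (\<lambda>y. frechet_derivative f (at y) u)"
  define E where "E y = frechet_derivative W (at y) v" for y
  have Df: "\<And>y. y \<in> S \<Longrightarrow> (f has_derivative frechet_derivative f (at y)) (at y)"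
    using Ck2_facts(1)[OF C S] .
  have DW: "\<And>y. y \<in> S \<Longrightarrow> (W has_derivative frechet_derivative W (at y)) (at y)"
    unfolding W_def using Ck2_facts(2)[OF C S] .
  have cE: "continuous_on S E"
    unfolding E_def W_def using Ck2_facts(3)[OF C S] .
  from cE x e obtain d1 where d1: "d1 > 0" "\<forall>y\<in>S. dist y x < d1 \<longrightarrow> dist (E y) (E x) < e"
    unfolding continuous_on_iff by blast
  obtain r where r: "r > 0" "ball x r \<subseteq> S"
    using S x open_contains_ball by blast
  define \<delta> where "\<delta> = min d1 r"
  have \<delta>: "\<delta> > 0" using d1 r by (simp add: \<delta>_def)
  have near: "\<And>y. dist y x < \<delta> \<Longrightarrow> y \<in> S \<and> norm (E y - E x) < e"
  proof -
    fix y assume "dist y x < \<delta>"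
    then have "y \<in> S" using r by (auto simp: \<delta>_def dist_commute)
    then show "y \<in> S \<and> norm (E y - E x) < e" using d1 \<open>dist y x < \<delta>\<close>
      by (auto simp: \<delta>_def dist_norm)
  qed
  define d where "d = \<delta> / (norm u + norm v + 1)"
  have nuv: "norm u + norm v + 1 > 0" by (smt (verit) norm_ge_zero)
  have d: "d > 0" using \<delta> nuv by (simp add: d_def)
  show ?thesis
  proof (intro exI[of _ d] conjI allI impI)
    show "d > 0" by (fact d)
    fix t assume t: "0 < t \<and> t < d"
    have pts: "dist (x + a *\<^sub>R u + b *\<^sub>R v) x < \<delta>" if "a \<in> {0..t}" "b \<in> {0..t}" for a b
    proof -
      have "norm (a *\<^sub>R u + b *\<^sub>R v) \<le> norm (a *\<^sub>R u) + norm (b *\<^sub>R v)" by (rule norm_triangle_ineq)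
      also have "\<dots> = a * norm u + b * norm v" using that by simp
      also have "\<dots> \<le> t * norm u + t * norm v" using that
        by (intro add_mono mult_right_mono) auto
      also have "\<dots> \<le> t * (norm u + norm v + 1)" using t by (simp add: algebra_simps)
      also have "\<dots> < d * (norm u + norm v + 1)" using t nuv by (intro mult_strict_right_mono) auto
      also have "\<dots> = \<delta>" using nuv by (simp add: d_def)
      finally show ?thesis by (simp add: dist_norm add.assoc)
    qed
    have pts': "x + a *\<^sub>R u + b *\<^sub>R v \<in> S \<and> norm (E (x + a *\<^sub>R u + b *\<^sub>R v) - E x) < e"
      if "a \<in> {0..t}" "b \<in> {0..t}" for a b
      using near[OF pts[OF that]] .
    have step1: "norm (W (x + a *\<^sub>R u + t *\<^sub>R v) - W (x + a *\<^sub>R u) - t *\<^sub>R E x) \<le> 3*e*t"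
      if a: "a \<in> {0..t}" for a
    proof -
      have der: "((\<lambda>b. W (x + a *\<^sub>R u + b *\<^sub>R v)) has_vector_derivative E (x + a *\<^sub>R u + b *\<^sub>R v))
                   (at b within {0..t})" if "b \<in> {0..t}" for b
        unfolding E_def
        by (rule has_vector_derivative_at_within, rule line_vderiv, rule DW)
           (use pts'[OF a that] in auto)
      have "norm (W (x + a *\<^sub>R u + t *\<^sub>R v) - W (x + a *\<^sub>R u + 0 *\<^sub>R v)
              - (t - 0) *\<^sub>R E (x + a *\<^sub>R u + 0 *\<^sub>R v)) \<le> norm (t - 0) * (2*e)"
      proof (rule vector_differentiable_bound_linearization[where S="{0..t}"])
        show "closed_segment 0 t \<subseteq> {0..t}" using t by (simp add: closed_segment_eq_real_ivl)
        show "0 \<in> {0..t}" using t by simp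
        fix b assume b: "b \<in> {0..t}"
        show "((\<lambda>b. W (x + a *\<^sub>R u + b *\<^sub>R v)) has_vector_derivative E (x + a *\<^sub>R u + b *\<^sub>R v))
                   (at b within {0..t})" by (rule der[OF b])
        have "0 \<in> {0..t}" using t by simp
        have "norm (E (x + a *\<^sub>R u + b *\<^sub>R v) - E (x + a *\<^sub>R u + 0 *\<^sub>R v))
              \<le> norm (E (x + a *\<^sub>R u + b *\<^sub>R v) - E x) + norm (E (x + a *\<^sub>R u + 0 *\<^sub>R v) - E x)"
          by (rule tri3)
        also have "\<dots> \<le> 2*e" using pts'[OF a b] pts'[OF a \<open>0 \<in> {0..t}\<close>] by simp
        finally show "norm (E (x + a *\<^sub>R u + b *\<^sub>R v) - E (x + a *\<^sub>R u + 0 *\<^sub>R v)) \<le> 2*e" .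
      qed
      then have A: "norm (W (x + a *\<^sub>R u + t *\<^sub>R v) - W (x + a *\<^sub>R u) - t *\<^sub>R E (x + a *\<^sub>R u)) \<le> t * (2*e)"
        using t by simp
      have "0 \<in> {0..t}" using t by simp
      have B: "norm (t *\<^sub>R E (x + a *\<^sub>R u) - t *\<^sub>R E x) \<le> t * e"
        using pts'[OF a \<open>0 \<in> {0..t}\<close>] t
        by (simp add: scaleR_diff_right[symmetric])
      have "norm (W (x + a *\<^sub>R u + t *\<^sub>R v) - W (x + a *\<^sub>R u) - t *\<^sub>R E x)
          \<le> norm (W (x + a *\<^sub>R u + t *\<^sub>R v) - W (x + a *\<^sub>R u) - t *\<^sub>R E (x + a *\<^sub>R u))
            + norm (t *\<^sub>R E (x + a *\<^sub>R u) - t *\<^sub>R E x)"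
        by (rule order_trans[OF _ norm_triangle_ineq]) (simp add: algebra_simps)
      also have "\<dots> \<le> 3*e*t" using A B by (simp add: algebra_simps)
      finally show ?thesis .
    qed
    have eqp: "\<And>a. x + t *\<^sub>R v + a *\<^sub>R u = x + a *\<^sub>R u + t *\<^sub>R v" by (simp add: algebra_simps)
    define \<psi> where "\<psi> = (\<lambda>a. f (x + t *\<^sub>R v + a *\<^sub>R u) - f (x + a *\<^sub>R u))"
    define \<psi>' where "\<psi>' a = W (x + t *\<^sub>R v + a *\<^sub>R u) - W (x + a *\<^sub>R u)" for a
    have dpsi: "(\<psi> has_vector_derivative \<psi>' a) (at a within {0..t})" if a: "a \<in> {0..t}" for a
    proof -
      have "0 \<in> {0..t}" "t \<in> {0..t}" using t by auto
      have s1: "x + t *\<^sub>R v + a *\<^sub>R u \<in> S" using pts'[OF a \<open>t \<in> {0..t}\<close>] by (simp only: eqp)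
      have s2: "x + a *\<^sub>R u \<in> S" using pts'[OF a \<open>0 \<in> {0..t}\<close>] by simp
      have "((\<lambda>a. f (x + t *\<^sub>R v + a *\<^sub>R u)) has_vector_derivative W (x + t *\<^sub>R v + a *\<^sub>R u)) (at a)"
        unfolding W_def using line_vderiv[where \<phi>=f and \<phi>'="frechet_derivative f (at (x + t *\<^sub>R v + a *\<^sub>R u))"
          and p="x + t *\<^sub>R v" and v=u and b=a] Df[OF s1] by simp
      moreover have "((\<lambda>a. f (x + a *\<^sub>R u)) has_vector_derivative W (x + a *\<^sub>R u)) (at a)"
        unfolding W_def using line_vderiv[where \<phi>=f and \<phi>'="frechet_derivative f (at (x + a *\<^sub>R u))"
          and p="x" and v=u and b=a] Df[OF s2] by simp
      ultimately show ?thesis unfolding \<psi>_def \<psi>'_def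
        by (rule has_vector_derivative_at_within[OF has_vector_derivative_diff])
    qed
    have p1: "norm (\<psi>' a - t *\<^sub>R E x) \<le> 3*e*t" if a: "a \<in> {0..t}" for a
    proof -
      have "\<psi>' a - t *\<^sub>R E x = W (x + a *\<^sub>R u + t *\<^sub>R v) - W (x + a *\<^sub>R u) - t *\<^sub>R E x"
        by (simp only: \<psi>'_def eqp)
      then show ?thesis using step1[OF a] by simp
    qed
    have "0 \<in> {0..t}" using t by simp
    have "norm (\<psi> t - \<psi> 0 - (t - 0) *\<^sub>R \<psi>' 0) \<le> norm (t - 0) * (6*e*t)"
    proof (rule vector_differentiable_bound_linearization[where S="{0..t}"])
      show "closed_segment 0 t \<subseteq> {0..t}" using t by (simp add: closed_segment_eq_real_ivl)
      show "0 \<in> {0..t}" using t by simp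
      fix a assume a: "a \<in> {0..t}"
      show "(\<psi> has_vector_derivative \<psi>' a) (at a within {0..t})" by (rule dpsi[OF a])
      have "norm (\<psi>' a - \<psi>' 0) \<le> norm (\<psi>' a - t *\<^sub>R E x) + norm (\<psi>' 0 - t *\<^sub>R E x)"
        by (rule tri3)
      also have "\<dots> \<le> 3*e*t + 3*e*t"
        using p1[OF a] p1[OF \<open>0 \<in> {0..t}\<close>] by (rule add_mono)
      also have "\<dots> = 6*e*t" by simp
      finally show "norm (\<psi>' a - \<psi>' 0) \<le> 6*e*t" .
    qed
    then have A: "norm (\<psi> t - \<psi> 0 - t *\<^sub>R \<psi>' 0) \<le> t * (6*e*t)" using t by simp
    have B: "norm (t *\<^sub>R \<psi>' 0 - (t*t) *\<^sub>R E x) \<le> t * (3*e*t)"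
    proof -
      have "t *\<^sub>R \<psi>' 0 - (t*t) *\<^sub>R E x = t *\<^sub>R (\<psi>' 0 - t *\<^sub>R E x)"
        by (simp add: scaleR_diff_right)
      then have "norm (t *\<^sub>R \<psi>' 0 - (t*t) *\<^sub>R E x) = t * norm (\<psi>' 0 - t *\<^sub>R E x)"
        using t by simp
      also have "\<dots> \<le> t * (3*e*t)" using p1[OF \<open>0 \<in> {0..t}\<close>] t
        by (intro mult_left_mono) auto
      finally show ?thesis .
    qed
    have eqA: "\<psi> t - \<psi> 0 - (t*t) *\<^sub>R E x = (\<psi> t - \<psi> 0 - t *\<^sub>R \<psi>' 0) + (t *\<^sub>R \<psi>' 0 - (t*t) *\<^sub>R E x)"
      by simp
    have "norm (\<psi> t - \<psi> 0 - (t*t) *\<^sub>R E x) \<le> norm (\<psi> t - \<psi> 0 - t *\<^sub>R \<psi>' 0) + norm (t *\<^sub>R \<psi>' 0 - (t*t) *\<^sub>R E x)"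
      unfolding eqA by (rule norm_triangle_ineq)
    also have "\<dots> \<le> t * (6*e*t) + t * (3*e*t)" using A B by (rule add_mono)
    also have "\<dots> = 9*e*(t*t)" by (simp add: algebra_simps)
    finally have fin: "norm (\<psi> t - \<psi> 0 - (t*t) *\<^sub>R E x) \<le> 9*e*(t*t)" .
    have "\<psi> t - \<psi> 0 = (f (x + t*\<^sub>R v + t*\<^sub>R u) - f (x + t*\<^sub>R u)) - (f (x + t*\<^sub>R v) - f x)"
      by (simp add: \<psi>_def)
    then show "norm ((f (x + t*\<^sub>R v + t*\<^sub>R u) - f (x + t*\<^sub>R u)) - (f (x + t*\<^sub>R v) - f x)
      - (t*t) *\<^sub>R frechet_derivative (\<lambda>y. frechet_derivative f (at y) u) (at x) v) \<le> 9*e*(t*t)"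
      using fin by (simp add: E_def W_def)
  qed
qed

lemma schwarz:
  fixes f :: "'a::real_normed_vector \<Rightarrow> 'b::real_normed_vector"
  assumes C: "Ck_on (Suc (Suc 0)) S f" and S: "open S" and x: "x \<in> S"
  shows "frechet_derivative (\<lambda>y. frechet_derivative f (at y) u) (at x) v
       = frechet_derivative (\<lambda>y. frechet_derivative f (at y) v) (at x) u"
proof -
  define A where "A = frechet_derivative (\<lambda>y. frechet_derivative f (at y) u) (at x) v"
  define B where "B = frechet_derivative (\<lambda>y. frechet_derivative f (at y) v) (at x) u"
  have "norm (A - B) \<le> 18 * e" if e: "e > 0" for e
  proof -
    obtain d1 where d1: "d1 > 0" "\<And>t. 0 < t \<and> t < d1 \<Longrightarrow>
      norm ((f (x + t*\<^sub>R v + t*\<^sub>R u) - f (x + t*\<^sub>R u)) - (f (x + t*\<^sub>R v) - f x) - (t*t) *\<^sub>R A) \<le> 9*e*(t*t)"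
      using schwarz_aux[OF C S x e, of v u] unfolding A_def by (elim exE conjE) auto
    obtain d2 where d2: "d2 > 0" "\<And>t. 0 < t \<and> t < d2 \<Longrightarrow>
      norm ((f (x + t*\<^sub>R u + t*\<^sub>R v) - f (x + t*\<^sub>R v)) - (f (x + t*\<^sub>R u) - f x) - (t*t) *\<^sub>R B) \<le> 9*e*(t*t)"
      using schwarz_aux[OF C S x e, of u v] unfolding B_def by (elim exE conjE) auto
    define t where "t = min d1 d2 / 2"
    have t: "0 < t" "t < d1" "t < d2" using d1 d2 by (auto simp: t_def)
    have eq: "x + t*\<^sub>R v + t*\<^sub>R u = x + t*\<^sub>R u + t*\<^sub>R v" by (simp add: algebra_simps)
    define D where "D = (f (x + t*\<^sub>R u + t*\<^sub>R v) - f (x + t*\<^sub>R v)) - (f (x + t*\<^sub>R u) - f x)"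
    have D1: "(f (x + t*\<^sub>R v + t*\<^sub>R u) - f (x + t*\<^sub>R u)) - (f (x + t*\<^sub>R v) - f x) = D"
      unfolding D_def eq by (simp add: algebra_simps)
    have n1: "norm (D - (t*t) *\<^sub>R A) \<le> 9*e*(t*t)" using d1(2)[of t] t D1 by simp
    have n2: "norm (D - (t*t) *\<^sub>R B) \<le> 9*e*(t*t)" using d2(2)[of t] t unfolding D_def by simp
    have "(t*t) * norm (A - B) = norm ((t*t) *\<^sub>R A - (t*t) *\<^sub>R B)"
      by (simp flip: scaleR_diff_right)
    also have "\<dots> \<le> norm (D - (t*t) *\<^sub>R A) + norm (D - (t*t) *\<^sub>R B)"
      using tri3[of "(t*t) *\<^sub>R A" "(t*t) *\<^sub>R B" D] by (simp add: norm_minus_commute)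
    also have "\<dots> \<le> 9*e*(t*t) + 9*e*(t*t)" using n1 n2 by (rule add_mono)
    also have "\<dots> = (t*t) * (18*e)" by simp
    finally show ?thesis using t by simp
  qed
  then have "norm (A - B) = 0"
  proof -
    assume h: "\<And>e. e > 0 \<Longrightarrow> norm (A - B) \<le> 18 * e"
    show ?thesis
    proof (rule ccontr)
      assume "norm (A - B) \<noteq> 0"
      then have p: "norm (A - B) > 0" by simp
      have "norm (A - B) \<le> 18 * (norm (A - B) / 36)" using h[of "norm (A - B) / 36"] p by simp
      then show False using p by simp
    qed
  qed
  then show ?thesis unfolding A_def B_def by simp
qed

lemma minv:
  fixes A :: "'a::field^'n^'n"
  assumes "invertible A"
  shows "A ** matrix_inv A = mat 1" "matrix_inv A ** A = mat 1"
  using someI_ex[OF assms[unfolded invertible_def]] unfolding matrix_inv_def by auto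

lemma herm_invertible:
  fixes M :: "complex^'n^'n"
  assumes "hermitian_metric_at M"
  shows "invertible (transpose M)"
proof -
  have "\<forall>x. transpose M *v x = 0 \<longrightarrow> x = 0"
  proof (intro allI impI)
    fix x :: "complex^'n" assume h: "transpose M *v x = 0"
    show "x = 0"
    proof (rule ccontr)
      assume "x \<noteq> 0"
      then have pos: "0 < Re (\<Sum>i\<in>UNIV. \<Sum>j\<in>UNIV. M $ i $ j * x $ i * cnj (x $ j))"
        using assms unfolding hermitian_metric_at_def by blast
      have "(\<Sum>i\<in>UNIV. \<Sum>j\<in>UNIV. M $ i $ j * x $ i * cnj (x $ j))
          = (\<Sum>j\<in>UNIV. cnj (x $ j) * (transpose M *v x) $ j)"
      proof -
        have "(\<Sum>i\<in>UNIV. \<Sum>j\<in>UNIV. M $ i $ j * x $ i * cnj (x $ j))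
            = (\<Sum>j\<in>UNIV. \<Sum>i\<in>UNIV. M $ i $ j * x $ i * cnj (x $ j))"
          by (rule sum.swap)
        also have "\<dots> = (\<Sum>j\<in>UNIV. cnj (x $ j) * (\<Sum>i\<in>UNIV. M $ i $ j * x $ i))"
          by (simp add: sum_distrib_left mult_ac)
        also have "\<dots> = (\<Sum>j\<in>UNIV. cnj (x $ j) * (transpose M *v x) $ j)"
          by (simp add: matrix_vector_mult_def transpose_def)
        finally show ?thesis .
      qed
      also have "\<dots> = 0" using h by simp
      finally show False using pos by simp
    qed
  qed
  then show ?thesis
    using invertible_left_inverse matrix_left_invertible_ker by blast
qed

lemma herm_inv_cnj:
  fixes M :: "complex^'n^'n"
  assumes "hermitian_metric_at M"
  shows "cnj (matrix_inv (transpose M) $ a $ b) = matrix_inv (transpose M) $ b $ a"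
proof -
  define N where "N = matrix_inv (transpose M)"
  have inv: "invertible (transpose M)" by (rule herm_invertible[OF assms])
  have NB: "N ** transpose M = mat 1" and BN: "transpose M ** N = mat 1"
    using minv[OF inv] unfolding N_def by auto
  have hM: "\<And>i j. M $ j $ i = cnj (M $ i $ j)" using assms unfolding hermitian_metric_at_def by blast
  define C where "C = (\<chi> i j. cnj (N $ i $ j))"
  have CM: "C ** M = mat 1"
  proof -
    have "(C ** M) $ i $ j = cnj ((N ** transpose M) $ i $ j)" for i j
      by (simp add: C_def matrix_matrix_mult_def transpose_def hM[of j])
    then show ?thesis using NB
      by (simp add: vec_eq_iff mat_def)
  qed
  have MN: "M ** transpose N = mat 1"
    using arg_cong[OF NB, of transpose] by (simp add: matrix_transpose_mul)
  have "C = C ** (M ** transpose N)" using MN by simp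
  also have "\<dots> = transpose N" by (simp add: matrix_mul_assoc CM)
  finally have "C $ a $ b = transpose N $ a $ b" by simp
  then show ?thesis by (simp add: C_def transpose_def N_def)
qed

lemma differentiable_prod':
  fixes f :: "'i \<Rightarrow> 'a::real_normed_vector \<Rightarrow> 'b::{real_normed_field}"
  assumes "finite I" "\<And>i. i \<in> I \<Longrightarrow> f i differentiable (at x within S)"
  shows "(\<lambda>t. \<Prod>i\<in>I. f i t) differentiable (at x within S)"
  using assms
proof (induction I rule: finite_induct)
  case empty
  then show ?case by simp
next
  case (insert a F)
  then show ?case by (simp add: prod.insert)
qed

lemma det_differentiable:
  fixes M :: "'a::real_normed_vector \<Rightarrow> 'b::real_normed_field^'n^'n"
  assumes "\<And>i j. (\<lambda>t. M t $ i $ j) differentiable (at x within S)"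
  shows "(\<lambda>t. det (M t)) differentiable (at x within S)"
  unfolding det_def
  by (intro differentiable_sum ballI differentiable_mult differentiable_const differentiable_prod')
     (auto simp: assms)

lemma inv_entry_differentiable:
  fixes A :: "real \<Rightarrow> complex^'n^'n"
  assumes I: "open I" "s \<in> I" and inv: "\<And>t. t \<in> I \<Longrightarrow> invertible (A t)"
    and diff: "\<And>i j. (\<lambda>t. A t $ i $ j) differentiable (at s)"
  shows "(\<lambda>t. matrix_inv (A t) $ k $ l) differentiable (at s)"
proof -
  define C where "C t = (\<chi> i j. if j = k then axis l 1 $ i else A t $ i $ j)" for t
  have eq: "matrix_inv (A t) $ k $ l = det (C t) / det (A t)" if t: "t \<in> I" for t
  proof -
    have d0: "det (A t) \<noteq> 0" using inv[OF t] invertible_det_nz by blast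
    have "A t *v (matrix_inv (A t) *v axis l 1) = axis l 1"
      by (simp add: matrix_vector_mul_assoc minv[OF inv[OF t]])
    then have "matrix_inv (A t) *v axis l 1 = (\<chi> k. det(\<chi> i j. if j=k then axis l 1 $ i else A t $ i $ j) / det (A t))"
      using cramer[OF d0] by blast
    then have "(matrix_inv (A t) *v axis l 1) $ k = det (C t) / det (A t)"
      by (simp add: C_def)
    moreover have "(matrix_inv (A t) *v axis l 1) $ k = matrix_inv (A t) $ k $ l"
      by (simp add: matrix_vector_mult_def axis_def if_distrib cong: if_cong)
    ultimately show ?thesis by simp
  qed
  have dC: "(\<lambda>t. C t $ i $ j) differentiable (at s)" for i j
    by (cases "j = k") (auto simp: C_def diff)
  have dd: "(\<lambda>t. det (C t) / det (A t)) differentiable (at s)"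
    using inv[OF I(2)] invertible_det_nz
    by (intro differentiable_divide det_differentiable dC diff) auto
  then obtain D where D: "((\<lambda>t. det (C t) / det (A t)) has_derivative D) (at s)"
    unfolding differentiable_def by blast
  have "((\<lambda>t. matrix_inv (A t) $ k $ l) has_derivative D) (at s)"
    by (rule has_derivative_transform_within_open[OF D I(1) I(2)]) (simp add: eq)
  then show ?thesis unfolding differentiable_def by blast
qed

lemma inv_deriv:
  fixes A :: "real \<Rightarrow> complex^'n^'n"
  assumes I: "open I" "s \<in> I" and inv: "\<And>t. t \<in> I \<Longrightarrow> invertible (A t)"
    and dA: "\<And>i j. ((\<lambda>t. A t $ i $ j) has_vector_derivative H $ i $ j) (at s)"
  shows "((\<lambda>t. matrix_inv (A t) $ k $ l) has_vector_derivative
     - (\<Sum>x\<in>UNIV. \<Sum>y\<in>UNIV. matrix_inv (A s) $ k $ x * H $ x $ y * matrix_inv (A s) $ y $ l)) (at s)"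
proof -
  define N where "N t = matrix_inv (A t)" for t
  have diff: "\<And>i j. (\<lambda>t. A t $ i $ j) differentiable (at s)"
    using dA differentiableI_vector by blast
  define D where "D k l = vector_derivative (\<lambda>t. N t $ k $ l) (at s)" for k l
  have dN: "((\<lambda>t. N t $ k $ l) has_vector_derivative D k l) (at s)" for k l
    unfolding D_def N_def
    using inv_entry_differentiable[OF I inv diff] vector_derivative_works by blast
  have key: "(\<Sum>x\<in>UNIV. N s $ k $ x * H $ x $ j + D k x * A s $ x $ j) = 0" for k j
  proof -
    have d1: "((\<lambda>t. \<Sum>x\<in>UNIV. N t $ k $ x * A t $ x $ j) has_vector_derivative
               (\<Sum>x\<in>UNIV. N s $ k $ x * H $ x $ j + D k x * A s $ x $ j)) (at s)"
      by (intro has_vector_derivative_sum has_vector_derivative_mult dN dA)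
    have d2: "((\<lambda>t. \<Sum>x\<in>UNIV. N t $ k $ x * A t $ x $ j) has_vector_derivative 0) (at s)"
    proof (rule has_vector_derivative_transform_within_open[OF _ I(1) I(2)])
      show "((\<lambda>t. mat 1 $ k $ j) has_vector_derivative 0) (at s)" by simp
      fix t assume t: "t \<in> I"
      have "(N t ** A t) $ k $ j = mat 1 $ k $ j" using minv(2)[OF inv[OF t]] by (simp add: N_def)
      then show "mat 1 $ k $ j = (\<Sum>x\<in>UNIV. N t $ k $ x * A t $ x $ j)"
        by (simp add: matrix_matrix_mult_def)
    qed
    show ?thesis using vector_derivative_unique_at[OF d1 d2] .
  qed
  define Dm where "Dm = (\<chi> k l. D k l)"
  have DA: "Dm ** A s = - (N s ** H)"
    using key by (simp add: vec_eq_iff matrix_matrix_mult_def Dm_def sum.distrib eq_neg_iff_add_eq_0 add.commute)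
  have "Dm = Dm ** (A s ** N s)" using minv(1)[OF inv[OF I(2)]] by (simp add: N_def)
  also have "\<dots> = - (N s ** H) ** N s" by (simp add: matrix_mul_assoc DA)
  finally have "D k l = (- (N s ** H) ** N s) $ k $ l" by (simp add: Dm_def vec_eq_iff)
  also have "\<dots> = - (\<Sum>x\<in>UNIV. \<Sum>y\<in>UNIV. N s $ k $ x * H $ x $ y * N s $ y $ l)"
  proof -
    have "(- (N s ** H) ** N s) $ k $ l = - (\<Sum>y\<in>UNIV. \<Sum>x\<in>UNIV. N s $ k $ x * H $ x $ y * N s $ y $ l)"
      by (simp add: matrix_matrix_mult_def sum_distrib_right sum_negf)
    also have "\<dots> = - (\<Sum>x\<in>UNIV. \<Sum>y\<in>UNIV. N s $ k $ x * H $ x $ y * N s $ y $ l)"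
      by (subst sum.swap) (rule refl)
    finally show ?thesis .
  qed
  finally show ?thesis using dN[of k l] unfolding N_def by simp
qed

lemma sum2u: "(\<Sum>a\<in>UNIV. \<Sum>b\<in>UNIV. P a b) = (\<Sum>(a,b)\<in>UNIV. P a b)"
  by (simp add: sum.cartesian_product)

lemma sum8u:
  "(\<Sum>a\<in>UNIV. \<Sum>b\<in>UNIV. \<Sum>c\<in>UNIV. \<Sum>d\<in>UNIV. \<Sum>e\<in>UNIV. \<Sum>f\<in>UNIV. \<Sum>g\<in>UNIV. \<Sum>h\<in>UNIV. P a b c d e f g h)
   = (\<Sum>(a,b,c,d,e,f,g,h)\<in>UNIV. P a b c d e f g h)"
  by (simp only: sum2u)

lemma sum6u:
  "(\<Sum>a\<in>UNIV. \<Sum>b\<in>UNIV. \<Sum>c\<in>UNIV. \<Sum>d\<in>UNIV. \<Sum>e\<in>UNIV. \<Sum>f\<in>UNIV. P a b c d e f)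
   = (\<Sum>(a,b,c,d,e,f)\<in>UNIV. P a b c d e f)"
  by (simp only: sum2u)

lemma test:
  fixes N H :: "'n::finite \<Rightarrow> 'n \<Rightarrow> complex" and T :: "'n \<Rightarrow> 'n \<Rightarrow> 'n \<Rightarrow> complex"
  shows "(\<Sum>i\<in>UNIV. \<Sum>j\<in>UNIV. \<Sum>k\<in>UNIV. \<Sum>p\<in>UNIV. \<Sum>q\<in>UNIV. \<Sum>r\<in>UNIV.
      (- (\<Sum>x\<in>UNIV. \<Sum>y\<in>UNIV. N i x * H y x * N y p)) * N j q * N r k * T i j k * cnj (T p q r))
   = - (\<Sum>a\<in>UNIV. \<Sum>b\<in>UNIV. \<Sum>c\<in>UNIV. \<Sum>d\<in>UNIV. N a d * N c b * H c d *
        (\<Sum>k\<in>UNIV. \<Sum>l\<in>UNIV. \<Sum>m\<in>UNIV. \<Sum>n\<in>UNIV. N k l * N m n * T a k n * cnj (T b l m)))"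
proof -
  have L: "(\<Sum>i\<in>UNIV. \<Sum>j\<in>UNIV. \<Sum>k\<in>UNIV. \<Sum>p\<in>UNIV. \<Sum>q\<in>UNIV. \<Sum>r\<in>UNIV.
      (- (\<Sum>x\<in>UNIV. \<Sum>y\<in>UNIV. N i x * H y x * N y p)) * N j q * N r k * T i j k * cnj (T p q r))
    = - (\<Sum>i\<in>UNIV. \<Sum>j\<in>UNIV. \<Sum>k\<in>UNIV. \<Sum>p\<in>UNIV. \<Sum>q\<in>UNIV. \<Sum>r\<in>UNIV. \<Sum>x\<in>UNIV. \<Sum>y\<in>UNIV.
      N i x * H y x * N y p * N j q * N r k * T i j k * cnj (T p q r))"
    by (simp add: sum_distrib_right sum_negf)
  have R: "(\<Sum>a\<in>UNIV. \<Sum>b\<in>UNIV. \<Sum>c\<in>UNIV. \<Sum>d\<in>UNIV. N a d * N c b * H c d *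
        (\<Sum>k\<in>UNIV. \<Sum>l\<in>UNIV. \<Sum>m\<in>UNIV. \<Sum>n\<in>UNIV. N k l * N m n * T a k n * cnj (T b l m)))
     = (\<Sum>a\<in>UNIV. \<Sum>b\<in>UNIV. \<Sum>c\<in>UNIV. \<Sum>d\<in>UNIV. \<Sum>k\<in>UNIV. \<Sum>l\<in>UNIV. \<Sum>m\<in>UNIV. \<Sum>n\<in>UNIV.
        N a d * N c b * H c d * (N k l * N m n * T a k n * cnj (T b l m)))"
    by (simp add: sum_distrib_left)
  have M: "(\<Sum>i\<in>UNIV. \<Sum>j\<in>UNIV. \<Sum>k\<in>UNIV. \<Sum>p\<in>UNIV. \<Sum>q\<in>UNIV. \<Sum>r\<in>UNIV. \<Sum>x\<in>UNIV. \<Sum>y\<in>UNIV.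
      N i x * H y x * N y p * N j q * N r k * T i j k * cnj (T p q r))
    = (\<Sum>a\<in>UNIV. \<Sum>b\<in>UNIV. \<Sum>c\<in>UNIV. \<Sum>d\<in>UNIV. \<Sum>k\<in>UNIV. \<Sum>l\<in>UNIV. \<Sum>m\<in>UNIV. \<Sum>n\<in>UNIV.
        N a d * N c b * H c d * (N k l * N m n * T a k n * cnj (T b l m)))"
    unfolding sum8u
    by (rule sum.reindex_bij_witness[where i="\<lambda>(a,b,c,d,k,l,m,n). (a,k,n,b,l,m,d,c)"
                                         and j="\<lambda>(i,j,k,p,q,r,x,y). (i,p,y,x,j,q,r,k)"])
       (auto simp: mult_ac)
  show ?thesis using L R M by simp
qed

locale alg =
  fixes N H N' :: "'n::finite \<Rightarrow> 'n \<Rightarrow> complex"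
    and T dh dhb G :: "'n \<Rightarrow> 'n \<Rightarrow> 'n \<Rightarrow> complex"
  assumes Tanti: "\<And>i j k. T j i k = - T i j k"
    and Ganti: "\<And>i j a. G i j a - G j i a = (\<Sum>l\<in>UNIV. N a l * T i j l)"
    and Nh: "\<And>a b. cnj (N a b) = N b a"
    and dhb: "\<And>j l m. dhb j l m = cnj (dh j l m)"
    and N'_def: "\<And>i p. N' i p = - (\<Sum>x\<in>UNIV. \<Sum>y\<in>UNIV. N i x * H y x * N y p)"
begin

definition "Q1f i j = (\<Sum>k\<in>UNIV. \<Sum>l\<in>UNIV. \<Sum>m\<in>UNIV. \<Sum>n\<in>UNIV. N k l * N m n * T i k n * cnj (T j l m))"
definition "Q2f i j = (\<Sum>k\<in>UNIV. \<Sum>l\<in>UNIV. \<Sum>m\<in>UNIV. \<Sum>n\<in>UNIV. N k l * N m n * cnj (T l n i) * T k m j)"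
definition "IQ1 = (\<Sum>a\<in>UNIV. \<Sum>b\<in>UNIV. \<Sum>c\<in>UNIV. \<Sum>d\<in>UNIV. N a d * N c b * H c d * Q1f a b)"
definition "IQ2 = (\<Sum>a\<in>UNIV. \<Sum>b\<in>UNIV. \<Sum>c\<in>UNIV. \<Sum>d\<in>UNIV. N a d * N c b * H c d * Q2f a b)"
definition "nab i k n = dh i k n - (\<Sum>p\<in>UNIV. G i k p * H p n)"
definition "nabb j l m = dhb j l m - (\<Sum>q\<in>UNIV. cnj (G j l q) * H m q)"
definition "S1 = (\<Sum>i\<in>UNIV. \<Sum>j\<in>UNIV. \<Sum>k\<in>UNIV. \<Sum>l\<in>UNIV. \<Sum>m\<in>UNIV. \<Sum>n\<in>UNIV.
                  N i j * N k l * N m n * (nab i k n * cnj (T j l m)))"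
definition "S2 = (\<Sum>i\<in>UNIV. \<Sum>j\<in>UNIV. \<Sum>k\<in>UNIV. \<Sum>l\<in>UNIV. \<Sum>m\<in>UNIV. \<Sum>n\<in>UNIV.
                  N i j * N k l * N m n * (T i k n * nabb j l m))"

lemma IQ1_exp: "IQ1 = (\<Sum>a\<in>UNIV. \<Sum>b\<in>UNIV. \<Sum>c\<in>UNIV. \<Sum>d\<in>UNIV. \<Sum>k\<in>UNIV. \<Sum>l\<in>UNIV. \<Sum>m\<in>UNIV. \<Sum>n\<in>UNIV.
        N a d * N c b * H c d * (N k l * N m n * T a k n * cnj (T b l m)))"
  unfolding IQ1_def Q1f_def by (simp add: sum_distrib_left)

lemma IQ2_exp: "IQ2 = (\<Sum>a\<in>UNIV. \<Sum>b\<in>UNIV. \<Sum>c\<in>UNIV. \<Sum>d\<in>UNIV. \<Sum>k\<in>UNIV. \<Sum>l\<in>UNIV. \<Sum>m\<in>UNIV. \<Sum>n\<in>UNIV.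
        N a d * N c b * H c d * (N k l * N m n * cnj (T l n a) * T k m b))"
  unfolding IQ2_def Q2f_def by (simp add: sum_distrib_left)

lemma tt: "P * T i j k * cnj (T p q r) = P * T j i k * cnj (T q p r)"
proof -
  have a: "T j i k = - T i j k" "T q p r = - T p q r" by (rule Tanti)+
  show ?thesis by (simp only: a) simp
qed

lemma E1: "(\<Sum>i\<in>UNIV. \<Sum>j\<in>UNIV. \<Sum>k\<in>UNIV. \<Sum>p\<in>UNIV. \<Sum>q\<in>UNIV. \<Sum>r\<in>UNIV.
      N' i p * N j q * N r k * T i j k * cnj (T p q r)) = - IQ1"
proof -
  have L: "(\<Sum>i\<in>UNIV. \<Sum>j\<in>UNIV. \<Sum>k\<in>UNIV. \<Sum>p\<in>UNIV. \<Sum>q\<in>UNIV. \<Sum>r\<in>UNIV.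
      N' i p * N j q * N r k * T i j k * cnj (T p q r))
    = - (\<Sum>i\<in>UNIV. \<Sum>j\<in>UNIV. \<Sum>k\<in>UNIV. \<Sum>p\<in>UNIV. \<Sum>q\<in>UNIV. \<Sum>r\<in>UNIV. \<Sum>x\<in>UNIV. \<Sum>y\<in>UNIV.
      N i x * H y x * N y p * N j q * N r k * T i j k * cnj (T p q r))"
    by (simp add: N'_def sum_distrib_right sum_negf)
  have M: "(\<Sum>i\<in>UNIV. \<Sum>j\<in>UNIV. \<Sum>k\<in>UNIV. \<Sum>p\<in>UNIV. \<Sum>q\<in>UNIV. \<Sum>r\<in>UNIV. \<Sum>x\<in>UNIV. \<Sum>y\<in>UNIV.
      N i x * H y x * N y p * N j q * N r k * T i j k * cnj (T p q r)) = IQ1"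
    unfolding IQ1_exp sum8u
    by (rule sum.reindex_bij_witness[where i="\<lambda>(a,b,c,d,k,l,m,n). (a,k,n,b,l,m,d,c)"
                                         and j="\<lambda>(i,j,k,p,q,r,x,y). (i,p,y,x,j,q,r,k)"])
       (auto simp: mult_ac)
  show ?thesis using L M by simp
qed

lemma E2: "(\<Sum>i\<in>UNIV. \<Sum>j\<in>UNIV. \<Sum>k\<in>UNIV. \<Sum>p\<in>UNIV. \<Sum>q\<in>UNIV. \<Sum>r\<in>UNIV.
      N i p * N' j q * N r k * T i j k * cnj (T p q r)) = - IQ1"
proof -
  have "(\<Sum>i\<in>UNIV. \<Sum>j\<in>UNIV. \<Sum>k\<in>UNIV. \<Sum>p\<in>UNIV. \<Sum>q\<in>UNIV. \<Sum>r\<in>UNIV.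
      N i p * N' j q * N r k * T i j k * cnj (T p q r))
    = (\<Sum>i\<in>UNIV. \<Sum>j\<in>UNIV. \<Sum>k\<in>UNIV. \<Sum>p\<in>UNIV. \<Sum>q\<in>UNIV. \<Sum>r\<in>UNIV.
      N i p * N' j q * N r k * T j i k * cnj (T q p r))"
    by (intro sum.cong refl) (rule tt)
  also have "\<dots> = (\<Sum>i\<in>UNIV. \<Sum>j\<in>UNIV. \<Sum>k\<in>UNIV. \<Sum>p\<in>UNIV. \<Sum>q\<in>UNIV. \<Sum>r\<in>UNIV.
      N' i p * N j q * N r k * T i j k * cnj (T p q r))"
    unfolding sum6u
    by (rule sum.reindex_bij_witness[where i="\<lambda>(i,j,k,p,q,r). (j,i,k,q,p,r)"
                                         and j="\<lambda>(i,j,k,p,q,r). (j,i,k,q,p,r)"])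
       (auto simp: mult_ac)
  also have "\<dots> = - IQ1" by (rule E1)
  finally show ?thesis .
qed

lemma E3: "(\<Sum>i\<in>UNIV. \<Sum>j\<in>UNIV. \<Sum>k\<in>UNIV. \<Sum>p\<in>UNIV. \<Sum>q\<in>UNIV. \<Sum>r\<in>UNIV.
      N i p * N j q * N' r k * T i j k * cnj (T p q r)) = - IQ2"
proof -
  have L: "(\<Sum>i\<in>UNIV. \<Sum>j\<in>UNIV. \<Sum>k\<in>UNIV. \<Sum>p\<in>UNIV. \<Sum>q\<in>UNIV. \<Sum>r\<in>UNIV.
      N i p * N j q * N' r k * T i j k * cnj (T p q r))
    = - (\<Sum>i\<in>UNIV. \<Sum>j\<in>UNIV. \<Sum>k\<in>UNIV. \<Sum>p\<in>UNIV. \<Sum>q\<in>UNIV. \<Sum>r\<in>UNIV. \<Sum>x\<in>UNIV. \<Sum>y\<in>UNIV.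
      N i p * N j q * N r x * H y x * N y k * T i j k * cnj (T p q r))"
    by (simp add: N'_def sum_distrib_right sum_distrib_left sum_negf mult_ac)
  have M: "(\<Sum>i\<in>UNIV. \<Sum>j\<in>UNIV. \<Sum>k\<in>UNIV. \<Sum>p\<in>UNIV. \<Sum>q\<in>UNIV. \<Sum>r\<in>UNIV. \<Sum>x\<in>UNIV. \<Sum>y\<in>UNIV.
      N i p * N j q * N r x * H y x * N y k * T i j k * cnj (T p q r)) = IQ2"
    unfolding IQ2_exp sum8u
    by (rule sum.reindex_bij_witness[where i="\<lambda>(a,b,c,d,k,l,m,n). (k,m,b,l,n,a,d,c)"
                                         and j="\<lambda>(i,j,k,p,q,r,x,y). (r,k,y,x,i,p,j,q)"])
       (auto simp: mult_ac)
  show ?thesis using L M by simp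
qed

lemma P4: "dh i j k - dh j i k = nab i j k - nab j i k + (\<Sum>x\<in>UNIV. \<Sum>l\<in>UNIV. N x l * T i j l * H x k)"
proof -
  have "(\<Sum>p\<in>UNIV. G i j p * H p k) - (\<Sum>p\<in>UNIV. G j i p * H p k) = (\<Sum>p\<in>UNIV. (G i j p - G j i p) * H p k)"
    by (simp add: sum_subtractf left_diff_distrib)
  also have "\<dots> = (\<Sum>p\<in>UNIV. (\<Sum>l\<in>UNIV. N p l * T i j l) * H p k)" by (simp add: Ganti)
  also have "\<dots> = (\<Sum>x\<in>UNIV. \<Sum>l\<in>UNIV. N x l * T i j l * H x k)" by (simp add: sum_distrib_right)
  finally show ?thesis unfolding nab_def by (simp add: algebra_simps)
qed

lemma P5: "cnj (dh p q r - dh q p r) = nabb p q r - nabb q p r + (\<Sum>x\<in>UNIV. \<Sum>a\<in>UNIV. N a x * cnj (T p q a) * H r x)"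
proof -
  have g: "cnj (G p q x) - cnj (G q p x) = (\<Sum>a\<in>UNIV. N a x * cnj (T p q a))" for x
  proof -
    have "cnj (G p q x) - cnj (G q p x) = cnj (G p q x - G q p x)" by simp
    also have "\<dots> = (\<Sum>a\<in>UNIV. cnj (N x a) * cnj (T p q a))" by (simp add: Ganti cnj_sum)
    finally show ?thesis by (simp add: Nh)
  qed
  have "(\<Sum>x\<in>UNIV. cnj (G p q x) * H r x) - (\<Sum>x\<in>UNIV. cnj (G q p x) * H r x)
      = (\<Sum>x\<in>UNIV. (cnj (G p q x) - cnj (G q p x)) * H r x)"
    by (simp add: sum_subtractf left_diff_distrib)
  also have "\<dots> = (\<Sum>x\<in>UNIV. (\<Sum>a\<in>UNIV. N a x * cnj (T p q a)) * H r x)" by (simp add: g)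
  also have "\<dots> = (\<Sum>x\<in>UNIV. \<Sum>a\<in>UNIV. N a x * cnj (T p q a) * H r x)" by (simp add: sum_distrib_right)
  finally show ?thesis unfolding nabb_def dhb by (simp add: algebra_simps)
qed

lemma E4a: "(\<Sum>i\<in>UNIV. \<Sum>j\<in>UNIV. \<Sum>k\<in>UNIV. \<Sum>p\<in>UNIV. \<Sum>q\<in>UNIV. \<Sum>r\<in>UNIV.
      N i p * N j q * N r k * nab i j k * cnj (T p q r)) = S1"
  unfolding S1_def sum6u
  by (rule sum.reindex_bij_witness[where i="\<lambda>(i,j,k,l,m,n). (i,k,n,j,l,m)"
                                       and j="\<lambda>(i,j,k,p,q,r). (i,p,j,q,r,k)"])
     (auto simp: mult_ac)

lemma tc: "P * cnj (T p q r) = - (P * cnj (T q p r))"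
proof -
  have a: "T p q r = - T q p r" by (rule Tanti)
  show ?thesis by (simp only: a) simp
qed

lemma tc2: "P * T i j k * Q = - (P * T j i k * Q)"
proof -
  have a: "T i j k = - T j i k" by (rule Tanti)
  show ?thesis by (simp only: a) simp
qed

lemma E4b: "(\<Sum>i\<in>UNIV. \<Sum>j\<in>UNIV. \<Sum>k\<in>UNIV. \<Sum>p\<in>UNIV. \<Sum>q\<in>UNIV. \<Sum>r\<in>UNIV.
      N i p * N j q * N r k * nab j i k * cnj (T p q r)) = - S1"
proof -
  have "(\<Sum>i\<in>UNIV. \<Sum>j\<in>UNIV. \<Sum>k\<in>UNIV. \<Sum>p\<in>UNIV. \<Sum>q\<in>UNIV. \<Sum>r\<in>UNIV.
      N i p * N j q * N r k * nab j i k * cnj (T p q r))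
    = - (\<Sum>i\<in>UNIV. \<Sum>j\<in>UNIV. \<Sum>k\<in>UNIV. \<Sum>p\<in>UNIV. \<Sum>q\<in>UNIV. \<Sum>r\<in>UNIV.
      N i p * N j q * N r k * nab j i k * cnj (T q p r))"
    unfolding sum_negf[symmetric] by (intro sum.cong refl) (rule tc)
  also have "(\<Sum>i\<in>UNIV. \<Sum>j\<in>UNIV. \<Sum>k\<in>UNIV. \<Sum>p\<in>UNIV. \<Sum>q\<in>UNIV. \<Sum>r\<in>UNIV.
      N i p * N j q * N r k * nab j i k * cnj (T q p r)) = S1"
    unfolding S1_def sum6u
    by (rule sum.reindex_bij_witness[where i="\<lambda>(i,j,k,l,m,n). (k,i,n,l,j,m)"
                                         and j="\<lambda>(i,j,k,p,q,r). (j,q,i,p,r,k)"])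
       (auto simp: mult_ac)
  finally show ?thesis .
qed

lemma E4c: "(\<Sum>i\<in>UNIV. \<Sum>j\<in>UNIV. \<Sum>k\<in>UNIV. \<Sum>p\<in>UNIV. \<Sum>q\<in>UNIV. \<Sum>r\<in>UNIV.
      N i p * N j q * N r k * (\<Sum>x\<in>UNIV. \<Sum>l\<in>UNIV. N x l * T i j l * H x k) * cnj (T p q r)) = IQ2"
proof -
  have L: "(\<Sum>i\<in>UNIV. \<Sum>j\<in>UNIV. \<Sum>k\<in>UNIV. \<Sum>p\<in>UNIV. \<Sum>q\<in>UNIV. \<Sum>r\<in>UNIV.
      N i p * N j q * N r k * (\<Sum>x\<in>UNIV. \<Sum>l\<in>UNIV. N x l * T i j l * H x k) * cnj (T p q r))
    = (\<Sum>i\<in>UNIV. \<Sum>j\<in>UNIV. \<Sum>k\<in>UNIV. \<Sum>p\<in>UNIV. \<Sum>q\<in>UNIV. \<Sum>r\<in>UNIV. \<Sum>x\<in>UNIV. \<Sum>l\<in>UNIV.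
      N i p * N j q * N r k * N x l * T i j l * H x k * cnj (T p q r))"
    by (simp add: sum_distrib_right sum_distrib_left mult_ac)
  have M: "(\<Sum>i\<in>UNIV. \<Sum>j\<in>UNIV. \<Sum>k\<in>UNIV. \<Sum>p\<in>UNIV. \<Sum>q\<in>UNIV. \<Sum>r\<in>UNIV. \<Sum>x\<in>UNIV. \<Sum>l\<in>UNIV.
      N i p * N j q * N r k * N x l * T i j l * H x k * cnj (T p q r)) = IQ2"
    unfolding IQ2_exp sum8u
    by (rule sum.reindex_bij_witness[where i="\<lambda>(a,b,c,d,k,l,m,n). (k,m,d,l,n,a,c,b)"
                                         and j="\<lambda>(i,j,k,p,q,r,x,l). (r,l,x,k,i,p,j,q)"])
       (auto simp: mult_ac)
  show ?thesis using L M by simp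
qed

lemma E5a: "(\<Sum>i\<in>UNIV. \<Sum>j\<in>UNIV. \<Sum>k\<in>UNIV. \<Sum>p\<in>UNIV. \<Sum>q\<in>UNIV. \<Sum>r\<in>UNIV.
      N i p * N j q * N r k * T i j k * nabb p q r) = S2"
  unfolding S2_def sum6u
  by (rule sum.reindex_bij_witness[where i="\<lambda>(i,j,k,l,m,n). (i,k,n,j,l,m)"
                                       and j="\<lambda>(i,j,k,p,q,r). (i,p,j,q,r,k)"])
     (auto simp: mult_ac)

lemma E5b: "(\<Sum>i\<in>UNIV. \<Sum>j\<in>UNIV. \<Sum>k\<in>UNIV. \<Sum>p\<in>UNIV. \<Sum>q\<in>UNIV. \<Sum>r\<in>UNIV.
      N i p * N j q * N r k * T i j k * nabb q p r) = - S2"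
proof -
  have "(\<Sum>i\<in>UNIV. \<Sum>j\<in>UNIV. \<Sum>k\<in>UNIV. \<Sum>p\<in>UNIV. \<Sum>q\<in>UNIV. \<Sum>r\<in>UNIV.
      N i p * N j q * N r k * T i j k * nabb q p r)
    = - (\<Sum>i\<in>UNIV. \<Sum>j\<in>UNIV. \<Sum>k\<in>UNIV. \<Sum>p\<in>UNIV. \<Sum>q\<in>UNIV. \<Sum>r\<in>UNIV.
      N i p * N j q * N r k * T j i k * nabb q p r)"
    unfolding sum_negf[symmetric] by (intro sum.cong refl) (rule tc2)
  also have "(\<Sum>i\<in>UNIV. \<Sum>j\<in>UNIV. \<Sum>k\<in>UNIV. \<Sum>p\<in>UNIV. \<Sum>q\<in>UNIV. \<Sum>r\<in>UNIV.
      N i p * N j q * N r k * T j i k * nabb q p r) = S2"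
    unfolding S2_def sum6u
    by (rule sum.reindex_bij_witness[where i="\<lambda>(i,j,k,l,m,n). (k,i,n,l,j,m)"
                                         and j="\<lambda>(i,j,k,p,q,r). (j,q,i,p,r,k)"])
       (auto simp: mult_ac)
  finally show ?thesis .
qed

lemma E5c: "(\<Sum>i\<in>UNIV. \<Sum>j\<in>UNIV. \<Sum>k\<in>UNIV. \<Sum>p\<in>UNIV. \<Sum>q\<in>UNIV. \<Sum>r\<in>UNIV.
      N i p * N j q * N r k * T i j k * (\<Sum>x\<in>UNIV. \<Sum>a\<in>UNIV. N a x * cnj (T p q a) * H r x)) = IQ2"
proof -
  have L: "(\<Sum>i\<in>UNIV. \<Sum>j\<in>UNIV. \<Sum>k\<in>UNIV. \<Sum>p\<in>UNIV. \<Sum>q\<in>UNIV. \<Sum>r\<in>UNIV.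
      N i p * N j q * N r k * T i j k * (\<Sum>x\<in>UNIV. \<Sum>a\<in>UNIV. N a x * cnj (T p q a) * H r x))
    = (\<Sum>i\<in>UNIV. \<Sum>j\<in>UNIV. \<Sum>k\<in>UNIV. \<Sum>p\<in>UNIV. \<Sum>q\<in>UNIV. \<Sum>r\<in>UNIV. \<Sum>x\<in>UNIV. \<Sum>a\<in>UNIV.
      N i p * N j q * N r k * T i j k * N a x * cnj (T p q a) * H r x)"
    by (simp add: sum_distrib_right sum_distrib_left mult_ac)
  have M: "(\<Sum>i\<in>UNIV. \<Sum>j\<in>UNIV. \<Sum>k\<in>UNIV. \<Sum>p\<in>UNIV. \<Sum>q\<in>UNIV. \<Sum>r\<in>UNIV. \<Sum>x\<in>UNIV. \<Sum>a\<in>UNIV.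
      N i p * N j q * N r k * T i j k * N a x * cnj (T p q a) * H r x) = IQ2"
    unfolding IQ2_exp sum8u
    by (rule sum.reindex_bij_witness[where i="\<lambda>(a,b,c,d,k,l,m,n). (k,m,b,l,n,c,d,a)"
                                         and j="\<lambda>(i,j,k,p,q,r,x,a). (a,k,r,x,i,p,j,q)"])
       (auto simp: mult_ac)
  show ?thesis using L M by simp
qed

lemma E4: "(\<Sum>i\<in>UNIV. \<Sum>j\<in>UNIV. \<Sum>k\<in>UNIV. \<Sum>p\<in>UNIV. \<Sum>q\<in>UNIV. \<Sum>r\<in>UNIV.
      N i p * N j q * N r k * (dh i j k - dh j i k) * cnj (T p q r)) = 2 * S1 + IQ2"
proof -
  have "(\<Sum>i\<in>UNIV. \<Sum>j\<in>UNIV. \<Sum>k\<in>UNIV. \<Sum>p\<in>UNIV. \<Sum>q\<in>UNIV. \<Sum>r\<in>UNIV.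
      N i p * N j q * N r k * (dh i j k - dh j i k) * cnj (T p q r))
    = (\<Sum>i\<in>UNIV. \<Sum>j\<in>UNIV. \<Sum>k\<in>UNIV. \<Sum>p\<in>UNIV. \<Sum>q\<in>UNIV. \<Sum>r\<in>UNIV.
      N i p * N j q * N r k * nab i j k * cnj (T p q r) - N i p * N j q * N r k * nab j i k * cnj (T p q r)
      + N i p * N j q * N r k * (\<Sum>x\<in>UNIV. \<Sum>l\<in>UNIV. N x l * T i j l * H x k) * cnj (T p q r))"
    by (intro sum.cong refl) (simp only: P4 algebra_simps)
  also have "\<dots> = S1 - (- S1) + IQ2"
    by (simp only: sum.distrib sum_subtractf E4a E4b E4c)
  finally show ?thesis by simp
qed

lemma E5: "(\<Sum>i\<in>UNIV. \<Sum>j\<in>UNIV. \<Sum>k\<in>UNIV. \<Sum>p\<in>UNIV. \<Sum>q\<in>UNIV. \<Sum>r\<in>UNIV.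
      N i p * N j q * N r k * T i j k * cnj (dh p q r - dh q p r)) = 2 * S2 + IQ2"
proof -
  have "(\<Sum>i\<in>UNIV. \<Sum>j\<in>UNIV. \<Sum>k\<in>UNIV. \<Sum>p\<in>UNIV. \<Sum>q\<in>UNIV. \<Sum>r\<in>UNIV.
      N i p * N j q * N r k * T i j k * cnj (dh p q r - dh q p r))
    = (\<Sum>i\<in>UNIV. \<Sum>j\<in>UNIV. \<Sum>k\<in>UNIV. \<Sum>p\<in>UNIV. \<Sum>q\<in>UNIV. \<Sum>r\<in>UNIV.
      N i p * N j q * N r k * T i j k * nabb p q r - N i p * N j q * N r k * T i j k * nabb q p r
      + N i p * N j q * N r k * T i j k * (\<Sum>x\<in>UNIV. \<Sum>a\<in>UNIV. N a x * cnj (T p q a) * H r x))"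
    by (intro sum.cong refl) (simp only: P5 algebra_simps)
  also have "\<dots> = S2 - (- S2) + IQ2"
    by (simp only: sum.distrib sum_subtractf E5a E5b E5c)
  finally show ?thesis by simp
qed

lemma alg_main:
  "(\<Sum>i\<in>UNIV. \<Sum>j\<in>UNIV. \<Sum>k\<in>UNIV. \<Sum>p\<in>UNIV. \<Sum>q\<in>UNIV. \<Sum>r\<in>UNIV.
      N' i p * N j q * N r k * T i j k * cnj (T p q r) + N i p * N' j q * N r k * T i j k * cnj (T p q r)
    + N i p * N j q * N' r k * T i j k * cnj (T p q r) + N i p * N j q * N r k * (dh i j k - dh j i k) * cnj (T p q r)
    + N i p * N j q * N r k * T i j k * cnj (dh p q r - dh q p r))
  = (\<Sum>a\<in>UNIV. \<Sum>b\<in>UNIV. \<Sum>c\<in>UNIV. \<Sum>d\<in>UNIV. N a d * N c b * H c d * (- 2 * Q1f a b + Q2f a b))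
    + 4 * (1/2 * (\<Sum>i\<in>UNIV. \<Sum>j\<in>UNIV. \<Sum>k\<in>UNIV. \<Sum>l\<in>UNIV. \<Sum>m\<in>UNIV. \<Sum>n\<in>UNIV.
        N i j * N k l * N m n * (nab i k n * cnj (T j l m) + T i k n * nabb j l m)))"
proof -
  have L: "(\<Sum>i\<in>UNIV. \<Sum>j\<in>UNIV. \<Sum>k\<in>UNIV. \<Sum>p\<in>UNIV. \<Sum>q\<in>UNIV. \<Sum>r\<in>UNIV.
      N' i p * N j q * N r k * T i j k * cnj (T p q r) + N i p * N' j q * N r k * T i j k * cnj (T p q r)
    + N i p * N j q * N' r k * T i j k * cnj (T p q r) + N i p * N j q * N r k * (dh i j k - dh j i k) * cnj (T p q r)
    + N i p * N j q * N r k * T i j k * cnj (dh p q r - dh q p r)) = - IQ1 + - IQ1 + - IQ2 + (2 * S1 + IQ2) + (2 * S2 + IQ2)"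
    by (simp only: sum.distrib E1 E2 E3 E4 E5)
  have R1: "(\<Sum>a\<in>UNIV. \<Sum>b\<in>UNIV. \<Sum>c\<in>UNIV. \<Sum>d\<in>UNIV. N a d * N c b * H c d * (- 2 * Q1f a b + Q2f a b))
     = - 2 * IQ1 + IQ2"
  proof -
    have "(\<Sum>a\<in>UNIV. \<Sum>b\<in>UNIV. \<Sum>c\<in>UNIV. \<Sum>d\<in>UNIV. N a d * N c b * H c d * (- 2 * Q1f a b + Q2f a b))
       = (\<Sum>a\<in>UNIV. \<Sum>b\<in>UNIV. \<Sum>c\<in>UNIV. \<Sum>d\<in>UNIV. (- 2) * (N a d * N c b * H c d * Q1f a b) + N a d * N c b * H c d * Q2f a b)"
      by (intro sum.cong refl) (simp add: algebra_simps)
    also have "\<dots> = - 2 * IQ1 + IQ2"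
      unfolding IQ1_def IQ2_def by (simp only: sum.distrib sum_distrib_left)
    finally show ?thesis .
  qed
  have R2: "(\<Sum>i\<in>UNIV. \<Sum>j\<in>UNIV. \<Sum>k\<in>UNIV. \<Sum>l\<in>UNIV. \<Sum>m\<in>UNIV. \<Sum>n\<in>UNIV.
        N i j * N k l * N m n * (nab i k n * cnj (T j l m) + T i k n * nabb j l m)) = S1 + S2"
    unfolding S1_def S2_def by (simp only: distrib_left sum.distrib)
  show ?thesis using L R1 R2 by simp
qed

end

lemma vd_nth:
  assumes "(f has_vector_derivative f') F"
  shows "((\<lambda>t. f t $ a $ b) has_vector_derivative f' $ a $ b) F"
  using bounded_linear.has_vector_derivative[OF bounded_linear_vec_nth
        bounded_linear.has_vector_derivative[OF bounded_linear_vec_nth assms]] .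

lemma hd_nth:
  assumes "(\<Phi> has_derivative \<Phi>') F"
  shows "((\<lambda>w. \<Phi> w $ j $ k) has_derivative (\<lambda>e. \<Phi>' e $ j $ k)) F"
  using bounded_linear.has_derivative[OF bounded_linear_vec_nth
        bounded_linear.has_derivative[OF bounded_linear_vec_nth assms]] .

lemma dz_has:
  assumes "(\<Phi> has_derivative \<Phi>') (at z)"
  shows "dz (\<lambda>w. \<Phi> w $ j $ k) i z = (\<Phi>' (axis i 1) $ j $ k - \<i> * \<Phi>' (axis i \<i>) $ j $ k) / 2"
    and "dzb (\<lambda>w. \<Phi> w $ j $ k) i z = (\<Phi>' (axis i 1) $ j $ k + \<i> * \<Phi>' (axis i \<i>) $ j $ k) / 2"
proof -
  have "frechet_derivative (\<lambda>w. \<Phi> w $ j $ k) (at z) = (\<lambda>e. \<Phi>' e $ j $ k)"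
    using frechet_derivative_at[OF hd_nth[OF assms]] by simp
  then show "dz (\<lambda>w. \<Phi> w $ j $ k) i z = (\<Phi>' (axis i 1) $ j $ k - \<i> * \<Phi>' (axis i \<i>) $ j $ k) / 2"
    and "dzb (\<lambda>w. \<Phi> w $ j $ k) i z = (\<Phi>' (axis i 1) $ j $ k + \<i> * \<Phi>' (axis i \<i>) $ j $ k) / 2"
    by (simp_all add: dz_def dzb_def)
qed

theorem lemma10p5:
  fixes g h :: "real \<Rightarrow> complex^'n \<Rightarrow> complex^'n^'n"
    and I :: "real set" and U :: "(complex^'n) set"
    and s :: real and z :: "complex^'n"
  assumes "open I" and "open U"
    and "smooth_on (I \<times> U) (\<lambda>(t, w). g t w)"
    and "\<And>t w. t \<in> I \<Longrightarrow> w \<in> U \<Longrightarrow> hermitian_metric_at (g t w)"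
    and "\<And>t w. t \<in> I \<Longrightarrow> w \<in> U \<Longrightarrow> ((\<lambda>r. g r w) has_vector_derivative h t w) (at t)"
    and "s \<in> I" and "z \<in> U"
  shows "((\<lambda>t. normT2 (g t) z) has_vector_derivative
           (inner11 (g s) z (h s z) (\<lambda>i j. - 2 * Q1 (g s) z i j + Q2 (g s) z i j)
            + 4 * innerNT (g s) (h s) z)) (at s)"
proof -
  note oI = assms(1) and oU = assms(2) and herm = assms(4) and hd = assms(5) and sI = assms(6) and zU = assms(7)
  define F where "F = (\<lambda>(t, w). g t w)"
  define S where "S = I \<times> U"
  have oS: "open S" unfolding S_def using oI oU by (rule open_Times)
  have C2: "Ck_on (Suc (Suc 0)) S F" using assms(3) unfolding smooth_on_def F_def S_def by blast
  have sz: "(s, z) \<in> S" using sI zU by (simp add: S_def)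
  define DF where "DF p = frechet_derivative F (at p)" for p
  have DFh: "\<And>p. p \<in> S \<Longrightarrow> (F has_derivative DF p) (at p)"
    unfolding DF_def using Ck2_facts(1)[OF C2 oS] .
  have hDF: "h t w = DF (t, w) (1, 0)" if t: "t \<in> I" and w: "w \<in> U" for t w
  proof -
    have tw: "(t, w) \<in> S" using t w by (simp add: S_def)
    have "((\<lambda>b. F ((0, w) + b *\<^sub>R (1, 0))) has_vector_derivative DF (t, w) (1, 0)) (at t)"
      using line_vderiv[where \<phi>=F and \<phi>'="DF (t, w)" and p="(0, w)" and v="(1, 0)" and b=t] DFh[OF tw]
      by simp
    then have "((\<lambda>r. g r w) has_vector_derivative DF (t, w) (1, 0)) (at t)"
      by (simp add: F_def)
    then show ?thesis using vector_derivative_unique_at[OF hd[OF t w]] by simp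
  qed
  have gw: "((\<lambda>w. g t w) has_derivative (\<lambda>e. DF (t, w) (0, e))) (at w)" if t: "t \<in> I" and w: "w \<in> U" for t w
  proof -
    have tw: "(t, w) \<in> S" using t w by (simp add: S_def)
    have "((\<lambda>w. (t, w)) has_derivative (\<lambda>e. (0, e))) (at w)"
      by (auto intro!: derivative_eq_intros)
    from has_derivative_compose[OF this DFh[OF tw]] show ?thesis by (simp add: F_def)
  qed
  define FD where "FD = frechet_derivative (\<lambda>q. DF q (1, 0)) (at (s, z))"
  have dDF: "((\<lambda>t. DF (t, z) (0, e)) has_vector_derivative FD (0, e)) (at s)" for e
  proof -
    have d: "((\<lambda>q. DF q (0, e)) has_derivative frechet_derivative (\<lambda>q. DF q (0, e)) (at (s, z))) (at (s, z))"
      unfolding DF_def using Ck2_facts(2)[OF C2 oS sz] .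
    have "((\<lambda>b. DF ((0, z) + b *\<^sub>R (1, 0)) (0, e)) has_vector_derivative
            frechet_derivative (\<lambda>q. DF q (0, e)) (at (s, z)) (1, 0)) (at s)"
      using line_vderiv[where \<phi>="\<lambda>q. DF q (0, e)" and \<phi>'="frechet_derivative (\<lambda>q. DF q (0, e)) (at (s, z))"
          and p="(0, z)" and v="(1, 0)" and b=s] d by simp
    moreover have "frechet_derivative (\<lambda>q. DF q (0, e)) (at (s, z)) (1, 0) = FD (0, e)"
      unfolding FD_def DF_def by (rule schwarz[OF C2 oS sz])
    ultimately show ?thesis by simp
  qed
  have hh: "((\<lambda>q. h (fst q) (snd q)) has_derivative FD) (at (s, z))"
  proof (rule has_derivative_transform_within_open[OF _ oS sz])
    show "((\<lambda>q. DF q (1, 0)) has_derivative FD) (at (s, z))"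
      unfolding FD_def DF_def using Ck2_facts(2)[OF C2 oS sz] .
    fix q assume "q \<in> S"
    then show "DF q (1, 0) = h (fst q) (snd q)" using hDF by (auto simp: S_def)
  qed
  have hs: "((\<lambda>w. h s w) has_derivative (\<lambda>e. FD (0, e))) (at z)"
  proof -
    have "((\<lambda>w. (s, w)) has_derivative (\<lambda>e. (0, e))) (at z)"
      by (auto intro!: derivative_eq_intros)
    from has_derivative_compose[OF this hh] show ?thesis by simp
  qed
  have dT: "((\<lambda>t. tor (g t) i j k z) has_vector_derivative
             (dz (\<lambda>w. h s w $ j $ k) i z - dz (\<lambda>w. h s w $ i $ k) j z)) (at s)" for i j k
  proof -
    define E where "E t = (DF (t, z) (0, axis i 1) $ j $ k - \<i> * DF (t, z) (0, axis i \<i>) $ j $ k) / 2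
        - (DF (t, z) (0, axis j 1) $ i $ k - \<i> * DF (t, z) (0, axis j \<i>) $ i $ k) / 2" for t
    have "(E has_vector_derivative
            (FD (0, axis i 1) $ j $ k - \<i> * FD (0, axis i \<i>) $ j $ k) / 2
          - (FD (0, axis j 1) $ i $ k - \<i> * FD (0, axis j \<i>) $ i $ k) / 2) (at s)"
      unfolding E_def
      by (intro has_vector_derivative_diff has_vector_derivative_divide has_vector_derivative_mult_right
            vd_nth dDF)
    then have "(E has_vector_derivative
             (dz (\<lambda>w. h s w $ j $ k) i z - dz (\<lambda>w. h s w $ i $ k) j z)) (at s)"
      by (simp add: dz_has[OF hs])
    then show ?thesis
    proof (rule has_vector_derivative_transform_within_open[OF _ oI sI])
      fix t assume t: "t \<in> I"
      show "E t = tor (g t) i j k z"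
        unfolding tor_def E_def by (simp add: dz_has[OF gw[OF t zU]])
    qed
  qed
  have dN: "((\<lambda>t. ginv (g t) z $ k $ l) has_vector_derivative
       - (\<Sum>x\<in>UNIV. \<Sum>y\<in>UNIV. ginv (g s) z $ k $ x * h s z $ y $ x * ginv (g s) z $ y $ l)) (at s)" for k l
  proof -
    have "((\<lambda>t. matrix_inv (transpose (g t z)) $ k $ l) has_vector_derivative
      - (\<Sum>x\<in>UNIV. \<Sum>y\<in>UNIV. matrix_inv (transpose (g s z)) $ k $ x * transpose (h s z) $ x $ y
             * matrix_inv (transpose (g s z)) $ y $ l)) (at s)"
    proof (rule inv_deriv[OF oI sI])
      show "\<And>t. t \<in> I \<Longrightarrow> invertible (transpose (g t z))" using herm_invertible herm zU by blast
      show "((\<lambda>t. transpose (g t z) $ i $ j) has_vector_derivative transpose (h s z) $ i $ j) (at s)" for i j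
        using vd_nth[OF hd[OF sI zU], of j i] by (simp add: transpose_def)
    qed
    then show ?thesis by (simp add: ginv_def transpose_def)
  qed
  have hherm: "h s w $ m $ l = cnj (h s w $ l $ m)" if w: "w \<in> U" for w m l
  proof -
    have d1: "((\<lambda>r. g r w $ m $ l) has_vector_derivative h s w $ m $ l) (at s)"
      by (rule vd_nth[OF hd[OF sI w]])
    have d2: "((\<lambda>r. cnj (g r w $ l $ m)) has_vector_derivative cnj (h s w $ l $ m)) (at s)"
      by (rule has_vector_derivative_cnj[OF vd_nth[OF hd[OF sI w]]])
    have d3: "((\<lambda>r. g r w $ m $ l) has_vector_derivative cnj (h s w $ l $ m)) (at s)"
    proof (rule has_vector_derivative_transform_within_open[OF d2 oI sI])
      fix r assume "r \<in> I"
      then show "cnj (g r w $ l $ m) = g r w $ m $ l"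
        using herm[OF _ w] unfolding hermitian_metric_at_def by metis
    qed
    show ?thesis using vector_derivative_unique_at[OF d1 d3] .
  qed
  have FDherm: "FD (0, e) $ m $ l = cnj (FD (0, e) $ l $ m)" for e m l
  proof -
    have d1: "((\<lambda>w. h s w $ m $ l) has_derivative (\<lambda>e. FD (0, e) $ m $ l)) (at z)"
      by (rule hd_nth[OF hs])
    have d2: "((\<lambda>w. cnj (h s w $ l $ m)) has_derivative (\<lambda>e. cnj (FD (0, e) $ l $ m))) (at z)"
      by (rule bounded_linear.has_derivative[OF bounded_linear_cnj hd_nth[OF hs]])
    have d3: "((\<lambda>w. h s w $ m $ l) has_derivative (\<lambda>e. cnj (FD (0, e) $ l $ m))) (at z)"
    proof (rule has_derivative_transform_within_open[OF d2 oU zU])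
      fix w assume "w \<in> U"
      then show "cnj (h s w $ l $ m) = h s w $ m $ l" by (rule hherm[symmetric])
    qed
    have "(\<lambda>e. FD (0, e) $ m $ l) = (\<lambda>e. cnj (FD (0, e) $ l $ m))"
      by (rule has_derivative_unique[OF d1 d3])
    then show ?thesis using fun_cong[of "\<lambda>e. FD (0, e) $ m $ l" "\<lambda>e. cnj (FD (0, e) $ l $ m)" e] by simp
  qed
  define Nf where "Nf a b = ginv (g s) z $ a $ b" for a b
  define Hf where "Hf a b = h s z $ a $ b" for a b
  define N'f where "N'f i p = - (\<Sum>x\<in>UNIV. \<Sum>y\<in>UNIV. Nf i x * Hf y x * Nf y p)" for i p
  define Tf where "Tf i j k = tor (g s) i j k z" for i j k
  define dhf where "dhf i j k = dz (\<lambda>w. h s w $ j $ k) i z" for i j k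
  define dhbf where "dhbf j l m = dzb (\<lambda>w. h s w $ m $ l) j z" for j l m
  define Gf where "Gf i j k = chris (g s) i j k z" for i j k
  interpret A: alg Nf Hf N'f Tf dhf dhbf Gf
  proof
    show "Tf j i k = - Tf i j k" for i j k by (simp add: Tf_def tor_def)
    show "Gf i j a - Gf j i a = (\<Sum>l\<in>UNIV. Nf a l * Tf i j l)" for i j a
      by (simp add: Gf_def Nf_def Tf_def chris_def tor_def sum_subtractf right_diff_distrib)
    show "cnj (Nf a b) = Nf b a" for a b
      unfolding Nf_def ginv_def by (rule herm_inv_cnj[OF herm[OF sI zU]])
    show "dhbf j l m = cnj (dhf j l m)" for j l m
      unfolding dhbf_def dhf_def dz_has[OF hs] FDherm[of _ m l] by simp
    show "N'f i p = - (\<Sum>x\<in>UNIV. \<Sum>y\<in>UNIV. Nf i x * Hf y x * Nf y p)" for i p by (simp add: N'f_def)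
  qed
  have main: "((\<lambda>t. normT2 (g t) z) has_vector_derivative
     (\<Sum>i\<in>UNIV. \<Sum>j\<in>UNIV. \<Sum>k\<in>UNIV. \<Sum>p\<in>UNIV. \<Sum>q\<in>UNIV. \<Sum>r\<in>UNIV.
      N'f i p * Nf j q * Nf r k * Tf i j k * cnj (Tf p q r) + Nf i p * N'f j q * Nf r k * Tf i j k * cnj (Tf p q r)
    + Nf i p * Nf j q * N'f r k * Tf i j k * cnj (Tf p q r) + Nf i p * Nf j q * Nf r k * (dhf i j k - dhf j i k) * cnj (Tf p q r)
    + Nf i p * Nf j q * Nf r k * Tf i j k * cnj (dhf p q r - dhf q p r))) (at s)"
    unfolding normT2_def
    apply (rule has_vector_derivative_eq_rhs)
     apply (rule has_vector_derivative_sum has_vector_derivative_mult has_vector_derivative_cnj dN dT)+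
    apply (intro sum.cong refl)
    apply (simp add: Nf_def N'f_def Hf_def Tf_def dhf_def algebra_simps)
    done
  show ?thesis
    apply (rule has_vector_derivative_eq_rhs[OF main])
    unfolding A.alg_main
    unfolding A.Q1f_def A.Q2f_def A.nab_def A.nabb_def inner11_def Q1_def Q2_def innerNT_def nabh_def nabbh_def
    by (simp add: Nf_def Hf_def Tf_def dhf_def dhbf_def Gf_def)
qed

end
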